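(* Let $n\ge 1$ be an integer, $a>0$, and let $a_0,\dots,a_{n-1}:((-a,a)\setminus\{0\})\times\mathbb{K}\to\mathbb{K}$ be arbitrary functions, where $\mathbb{K}=\mathbb{R}$ or $\mathbb{C}$. Let $f\in C^\infty(-a,a)$ (with values in $\mathbb{K}$) be a solution of $$f^{(n)}(x)+a_{n-1}(x,f(x))f^{(n-1)}(x)+\cdots+a_0(x,f(x))f(x)=0,\qquad x\in(-a,a)\setminus\{0\},$$ satisfying $f(0)=f'(0)=\cdots=f^{(n-1)}(0)=0$. Suppose that $$\limsup_{x\to 0}|x|^{n-k}\,|a_k(x,f(x))|\le \frac1e,\qquad k=0,1,\dots,n-1,$$ where $e$ is Euler's number. Then there exists $\delta>0$ such that $f\equiv 0$ on $[-\delta,\delta]$.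
   Context: The coefficients may be singular at $x=0$; the equation is only required to hold for $x\neq 0$. *)

theory Defs
  imports "HOL-Analysis.Analysis"
begin

fun nderiv :: "nat \<Rightarrow> (real \<Rightarrow> 'a::real_normed_vector) \<Rightarrow> real \<Rightarrow> 'a" where
  "nderiv 0 f = f"
| "nderiv (Suc k) f = (\<lambda>x. vector_derivative (nderiv k f) (at x))"

definition smooth_on :: "real set \<Rightarrow> (real \<Rightarrow> 'a::real_normed_vector) \<Rightarrow> bool" where
  "smooth_on S f \<longleftrightarrow>
     (\<forall>k. \<forall>x\<in>S. (nderiv k f has_vector_derivative nderiv (Suc k) f x) (at x))"

end

theory Submission imports Defs begin

lemma pow2_le_fact: "(2::real)^m \<le> fact (Suc m)"
proof (induction m)
  case 0 then show ?case by simp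
next
  case (Suc m)
  have "(2::real)^Suc m = 2 * 2^m" by simp
  also have "\<dots> \<le> 2 * fact (Suc m)" using Suc by simp
  also have "\<dots> \<le> real (Suc (Suc m)) * fact (Suc m)" by (intro mult_right_mono) auto
  also have "\<dots> = fact (Suc (Suc m))" by simp
  finally show ?case .
qed

lemma sum_pow2: "(\<Sum>k<n. (2::real)^k) = 2^n - 1"
  by (induction n) auto

lemma sum_inv_fact:
  assumes "n \<ge> 1"
  shows "(\<Sum>k<n. 1 / fact (n-k) :: real) \<le> 2 - 2 / 2^n"
proof -
  have "(\<Sum>k<n. 1 / fact (n-k) :: real) \<le> (\<Sum>k<n. 2^k / 2^(n-1))"
  proof (intro sum_mono)
    fix k assume k: "k \<in> {..<n}"
    have eq: "Suc (n-1-k) = n - k" using k by auto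
    have h: "(2::real)^(n-1-k) \<le> fact (n-k)" using pow2_le_fact[of "n-1-k"] unfolding eq .
    have e: "(2::real)^k / 2^(n-1) = 1 / 2^(n-1-k)"
    proof -
      have "(2::real)^(n-1) = 2^k * 2^(n-1-k)" using k by (simp add: power_add[symmetric])
      then show ?thesis by simp
    qed
    show "1 / fact (n-k) \<le> (2::real)^k / 2^(n-1)"
      unfolding e by (rule divide_left_mono) (use h in auto)
  qed
  also have "\<dots> = (2^n - 1) / 2^(n-1)" by (simp add: sum_divide_distrib[symmetric] sum_pow2)
  also have "\<dots> = 2 - 2/2^n"
  proof -
    obtain m where m: "n = Suc m" using assms by (cases n) auto
    have "(2::real)^n = 2 * 2^(n-1)" by (simp add: m)
    then show ?thesis by (simp add: field_simps)
  qed
  finally show ?thesis .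
qed

lemma step_bound:
  fixes h :: "real \<Rightarrow> 'a::real_normed_vector"
  assumes "\<forall>t\<in>{-\<rho>..\<rho>}. (h has_vector_derivative h' t) (at t)" "h 0 = 0"
    "\<forall>t\<in>{-\<rho>..\<rho>}. norm (h' t) \<le> M*\<bar>t\<bar>^j/fact j" "x\<in>{-\<rho>..\<rho>}"
  shows "norm (h x) \<le> M*\<bar>x\<bar>^(Suc j)/fact (Suc j)"
proof -
  have der: "t\<in>{-\<rho>..\<rho>} \<Longrightarrow> (h has_vector_derivative h' t) (at t)" for t using assms(1) by auto
  have cont: "continuous_on S h" if "S \<subseteq> {-\<rho>..\<rho>}" for S
    by (rule continuous_at_imp_continuous_on) (use der that has_vector_derivative_continuous in blast)
  consider "x > 0" | "x < 0" | "x = 0" by linarith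
  then show ?thesis
  proof cases
    case 1
    let ?p = "\<lambda>t::real. M*t^(Suc j)/fact (Suc j)"
    have "norm (h x - h 0) \<le> ?p x - ?p 0"
    proof (rule differentiable_bound_general[where f'=h' and \<phi>'="\<lambda>t. M*t^j/fact j"])
      show "0 < x" by fact
      show "continuous_on {0..x} h" using 1 assms(4) by (intro cont) auto
      show "continuous_on {0..x} ?p" by (intro continuous_intros) auto
      fix t assume t: "0 < t" "t < x"
      show "(h has_vector_derivative h' t) (at t)" using t assms(4) by (intro der) auto
      have "(?p has_real_derivative M * (real (Suc j) * t^j) / fact (Suc j)) (at t)"
        by (intro derivative_eq_intros) auto
      moreover have "M * (real (Suc j) * t^j) / fact (Suc j) = M*t^j/fact j"
        by (simp only: fact_Suc) (simp del: of_nat_Suc)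
      ultimately show "(?p has_vector_derivative M*t^j/fact j) (at t)"
        by (simp add: has_real_derivative_iff_has_vector_derivative)
      have tin: "t \<in> {-\<rho>..\<rho>}" using t assms(4) by auto
      show "norm (h' t) \<le> M*t^j/fact j" using bspec[OF assms(3) tin] t by simp
    qed
    then show ?thesis using assms(2) 1 by simp
  next
    case 2
    let ?p = "\<lambda>t::real. - M*(-t)^(Suc j)/fact (Suc j)"
    have "norm (h 0 - h x) \<le> ?p 0 - ?p x"
    proof (rule differentiable_bound_general[where f'=h' and \<phi>'="\<lambda>t. M*(-t)^j/fact j"])
      show "x < 0" by fact
      show "continuous_on {x..0} h" using 2 assms(4) by (intro cont) auto
      show "continuous_on {x..0} ?p" by (intro continuous_intros) auto
      fix t assume t: "x < t" "t < 0"
      show "(h has_vector_derivative h' t) (at t)" using t assms(4) by (intro der) auto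
      have "(?p has_real_derivative - M * (real (Suc j) * (-t)^j * (-1)) / fact (Suc j)) (at t)"
        by (intro derivative_eq_intros) auto
      moreover have "- M * (real (Suc j) * (-t)^j * (-1)) / fact (Suc j) = M*(-t)^j/fact j"
        by (simp only: fact_Suc) (simp del: of_nat_Suc)
      ultimately show "(?p has_vector_derivative M*(-t)^j/fact j) (at t)"
        by (simp add: has_real_derivative_iff_has_vector_derivative)
      have "\<bar>t\<bar> = -t" using t by simp
      moreover have tin: "t \<in> {-\<rho>..\<rho>}" using t assms(4) by auto
      moreover have "norm (h' t) \<le> M*\<bar>t\<bar>^j/fact j" using assms(3) tin by blast
      ultimately show "norm (h' t) \<le> M*(-t)^j/fact j" by simp
    qed
    moreover have "\<bar>x\<bar> = -x" using 2 by simp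
    ultimately show ?thesis using assms(2) 2 by (simp add: norm_minus_commute)
  next
    case 3 then show ?thesis using assms(2) by simp
  qed
qed

theorem theorem1:
  fixes n :: nat and a :: real
    and A :: "nat \<Rightarrow> real \<Rightarrow> 'a::real_normed_field \<Rightarrow> 'a"
    and f :: "real \<Rightarrow> 'a"
  assumes "n \<ge> 1" and "a > 0"
    and "smooth_on {-a<..<a} f"
    and "\<forall>x\<in>{-a<..<a} - {0}.
           nderiv n f x + (\<Sum>k<n. A k x (f x) * nderiv k f x) = 0"
    and "\<forall>k<n. nderiv k f 0 = 0"
    and "\<forall>k<n. Limsup (at (0::real)) (\<lambda>x. ereal (\<bar>x\<bar> ^ (n - k) * norm (A k x (f x))))
                \<le> ereal (1 / exp 1)"
  shows "\<exists>\<delta>>0. \<delta> < a \<and> (\<forall>x\<in>{-\<delta>..\<delta>}. f x = 0)"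
proof -
  define g where "g k = nderiv k f" for k
  have der: "\<And>k x. x\<in>{-a<..<a} \<Longrightarrow> (g k has_vector_derivative g (Suc k) x) (at x)"
    using assms(3) unfolding smooth_on_def g_def by auto
  have e2: "exp (1::real) > 2" using exp_1_gt_powr[of 1] by simp
  have "\<forall>k\<in>{..<n}. eventually (\<lambda>x. \<bar>x\<bar> ^ (n - k) * norm (A k x (f x)) < 1/2) (at (0::real))"
  proof
    fix k assume k: "k \<in> {..<n}"
    have "ereal (1 / exp 1) < ereal (1/2)" using e2 by (simp add: field_simps)
    then have "Limsup (at (0::real)) (\<lambda>x. ereal (\<bar>x\<bar> ^ (n - k) * norm (A k x (f x)))) < ereal (1/2)"
      using assms(6) k by (meson lessThan_iff order.strict_trans1)
    from Limsup_lessD[OF this] show "eventually (\<lambda>x. \<bar>x\<bar> ^ (n - k) * norm (A k x (f x)) < 1/2) (at (0::real))"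
      by simp
  qed
  then have "eventually (\<lambda>x. \<forall>k\<in>{..<n}. \<bar>x\<bar> ^ (n - k) * norm (A k x (f x)) < 1/2) (at (0::real))"
    by (intro eventually_ball_finite) auto
  then obtain d where d: "d > 0" and dA: "\<And>x k. x \<noteq> 0 \<Longrightarrow> \<bar>x\<bar> < d \<Longrightarrow> k < n \<Longrightarrow> \<bar>x\<bar> ^ (n - k) * norm (A k x (f x)) < 1/2"
    unfolding eventually_at by (auto simp: dist_real_def)
  define \<rho> where "\<rho> = min (d/2) (a/2)"
  have \<rho>: "\<rho> > 0" "\<rho> < d" "\<rho> < a" using d assms(2) by (auto simp: \<rho>_def)
  have sub: "{-\<rho>..\<rho>} \<subseteq> {-a<..<a}" using \<rho> by auto
  have contn: "continuous_on {-\<rho>..\<rho>} (g n)"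
    by (rule continuous_at_imp_continuous_on) (use der sub has_vector_derivative_continuous in blast)
  have "continuous_on {-\<rho>..\<rho>} (\<lambda>t. norm (g n t))" using contn by (intro continuous_intros)
  from continuous_attains_sup[OF compact_Icc _ this] \<rho>(1)
  obtain t0 where t0: "t0 \<in> {-\<rho>..\<rho>}" "\<And>t. t \<in> {-\<rho>..\<rho>} \<Longrightarrow> norm (g n t) \<le> norm (g n t0)"
    by force
  define M where "M = norm (g n t0)"
  have M0: "M \<ge> 0" by (simp add: M_def)
  have bnd: "\<forall>x\<in>{-\<rho>..\<rho>}. norm (g (n-j) x) \<le> M*\<bar>x\<bar>^j/fact j" if "j \<le> n" for j
    using that
  proof (induction j)
    case 0 then show ?case using t0 by (simp add: M_def)
  next
    case (Suc j)
    have eqk: "Suc (n - Suc j) = n - j" using Suc.prems by auto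
    show ?case
    proof
      fix x assume x: "x \<in> {-\<rho>..\<rho>}"
      show "norm (g (n - Suc j) x) \<le> M*\<bar>x\<bar>^(Suc j)/fact (Suc j)"
      proof (rule step_bound[where h'="g (n-j)" and \<rho>=\<rho>])
        show "\<forall>t\<in>{-\<rho>..\<rho>}. (g (n - Suc j) has_vector_derivative g (n-j) t) (at t)"
        proof
          fix t assume "t \<in> {-\<rho>..\<rho>}"
          then have "t \<in> {-a<..<a}" using sub by auto
          from der[OF this, of "n - Suc j"] show "(g (n - Suc j) has_vector_derivative g (n-j) t) (at t)"
            by (simp only: eqk)
        qed
        show "g (n - Suc j) 0 = 0" using assms(5) Suc.prems by (simp add: g_def)
        show "\<forall>t\<in>{-\<rho>..\<rho>}. norm (g (n-j) t) \<le> M*\<bar>t\<bar>^j/fact j" using Suc by simp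
      qed (use x in auto)
    qed
  qed
  define \<theta> :: real where "\<theta> = 1 - 1/2^n"
  have key: "norm (g n x) \<le> \<theta> * M" if x: "x \<in> {-\<rho>..\<rho>}" "x \<noteq> 0" for x
  proof -
    have xa: "x \<in> {-a<..<a} - {0}" using x sub by auto
    have "g n x = - (\<Sum>k<n. A k x (f x) * g k x)"
      using assms(4) xa unfolding g_def by (simp add: eq_neg_iff_add_eq_0)
    then have "norm (g n x) = norm (\<Sum>k<n. A k x (f x) * g k x)" by simp
    also have "\<dots> \<le> (\<Sum>k<n. norm (A k x (f x) * g k x))" by (rule norm_sum)
    also have "\<dots> = (\<Sum>k<n. norm (A k x (f x)) * norm (g k x))" by (simp add: norm_mult)
    also have "\<dots> \<le> (\<Sum>k<n. M / 2 * (1 / fact (n - k)))"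
    proof (intro sum_mono)
      fix k assume k: "k \<in> {..<n}"
      have nk: "n - (n - k) = k" using k by auto
      have "\<bar>x\<bar> < d" using x \<rho> by auto
      have b: "norm (g k x) \<le> M*\<bar>x\<bar>^(n-k)/fact (n-k)" using bnd[of "n-k"] x nk by auto
      have "norm (A k x (f x)) * norm (g k x) \<le> norm (A k x (f x)) * (M*\<bar>x\<bar>^(n-k)/fact (n-k))"
        using b by (intro mult_left_mono) auto
      also have "\<dots> = (\<bar>x\<bar>^(n-k) * norm (A k x (f x))) * (M / fact (n-k))" by simp
      also have "\<dots> \<le> (1/2) * (M / fact (n-k))"
        using dA[of x k] x k \<rho> M0 \<open>\<bar>x\<bar> < d\<close> by (intro mult_right_mono) auto
      finally show "norm (A k x (f x)) * norm (g k x) \<le> M / 2 * (1 / fact (n - k))" by simp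
    qed
    also have "\<dots> = M / 2 * (\<Sum>k<n. 1 / fact (n - k))" by (simp add: sum_distrib_left)
    also have "\<dots> \<le> M / 2 * (2 - 2/2^n)"
      using sum_inv_fact[OF assms(1)] M0 by (intro mult_left_mono) auto
    also have "\<dots> = \<theta> * M" by (simp add: \<theta>_def field_simps)
    finally show ?thesis .
  qed
  have key0: "norm (g n 0) \<le> \<theta> * M"
  proof (rule tendsto_upperbound)
    have "isCont (g n) 0" using der[of 0 n] assms(2) has_vector_derivative_continuous by auto
    then show "((\<lambda>t. norm (g n t)) \<longlongrightarrow> norm (g n 0)) (at 0)"
      by (intro tendsto_norm) (simp add: isCont_def)
    show "eventually (\<lambda>t. norm (g n t) \<le> \<theta> * M) (at (0::real))"
      unfolding eventually_at using \<rho>(1) by (intro exI[of _ \<rho>]) (auto intro!: key simp: dist_real_def)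
  qed simp
  have "M \<le> \<theta> * M" using t0(1) key key0 unfolding M_def by (cases "t0 = 0") auto
  moreover have "\<theta> < 1" by (simp add: \<theta>_def)
  ultimately have "(1 - \<theta>) * M \<le> 0" "1 - \<theta> > 0" by (simp_all add: algebra_simps)
  then have "M \<le> 0" by (simp add: mult_le_0_iff)
  then have "M = 0" using M0 by simp
  then have "\<forall>x\<in>{-\<rho>..\<rho>}. norm (g 0 x) \<le> 0" using bnd[of n] by simp
  then show ?thesis using \<rho> by (intro exI[of _ \<rho>]) (simp add: g_def)
qed

end
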